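(* Let $(S,+)$ be a semigroup with no idempotent element and of cardinality $\kappa>\omega$. Let $\mu$ be a cardinal with $\omega<\mu\le\kappa$ such that there is a family of $\lambda$ almost disjoint subsets of $\mu$, and let $A\subseteq S$ be an IP set with $|A|=\mu$. Then $A$ contains a family of $\lambda$ almost disjoint subsets each of which is an IP set.
   Context: For an infinite set $X$, a family $\mathcal{A}$ is a family of almost disjoint subsets of $X$ if each $B\in\mathcal{A}$ satisfies $B\subseteq X$ and $|B|=|X|$, and for distinct $B,C\in\mathcal{A}$, $|B\cap C|<|X|$. $e$ is idempotent if $e+e=e$. $A\subseteq S$ is an IP set if there is a sequence $\langle x_n\rangle_{n=1}^\infty$ in $S$ with all finite sums $\sum_{n\in H}x_n$ (increasing order, $H$ a nonempty finite subset of $\mathbb{N}$) in $A$. *)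

theory Defs
  imports Main "HOL-Library.Equipollence" "HOL-Library.Countable_Set"
begin

definition almost_disjoint_family :: "'a set \<Rightarrow> 'a set set \<Rightarrow> bool" where
  "almost_disjoint_family X F \<longleftrightarrow>
     (\<forall>B\<in>F. B \<subseteq> X \<and> B \<approx> X) \<and>
     (\<forall>B\<in>F. \<forall>C\<in>F. B \<noteq> C \<longrightarrow> B \<inter> C \<prec> X)"

definition fin_sum :: "(nat \<Rightarrow> 'a::semigroup_add) \<Rightarrow> nat set \<Rightarrow> 'a" where
  "fin_sum x H = (let l = map x (sorted_list_of_set H) in foldl (+) (hd l) (tl l))"

definition IP_set :: "'a::semigroup_add set \<Rightarrow> bool" where
  "IP_set A \<longleftrightarrow> (\<exists>x :: nat \<Rightarrow> 'a.
     \<forall>H. finite H \<and> H \<noteq> {} \<and> H \<subseteq> {1..} \<longrightarrow> fin_sum x H \<in> A)"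

end

theory Submission
  imports Defs
begin

unbundle cardinal_syntax

lemma Un_lepoll_inf:
  assumes "infinite X" "A \<lesssim> X" "B \<lesssim> X" shows "A \<union> B \<lesssim> X"
proof -
  have "|A| \<le>o |X|" "|B| \<le>o |X|" using assms(2,3) unfolding lepoll_def card_of_ordLeq[symmetric] by auto
  then have "|A \<union> B| \<le>o |X|"
    using card_of_Un_ordLeq_infinite_Field[of "|X|" A B] assms(1) by (simp add: card_of_card_order_on Field_card_of)
  then show ?thesis unfolding lepoll_def card_of_ordLeq[symmetric] by auto
qed

lemma countable_lepoll_inf:
  assumes "countable C" "infinite X" shows "C \<lesssim> X"
proof -
  have "C \<lesssim> (UNIV::nat set)" using assms(1) unfolding countable_def lepoll_def by auto
  also have "(UNIV::nat set) \<lesssim> X" using assms(2) infinite_le_lepoll by blast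
  finally show ?thesis .
qed

lemma diff_countable_eqpoll:
  assumes "uncountable A" "countable C" shows "A - C \<approx> A"
proof -
  have inf: "infinite (A - C)"
    using assms by (metis countable_Un countable_finite Un_Diff_cancel2 sup.absorb_iff1 Un_upper1 countable_subset)
  have "A \<lesssim> (A - C) \<union> C" by (rule subset_imp_lepoll) auto
  also have "(A - C) \<union> C \<lesssim> A - C"
    by (rule Un_lepoll_inf[OF inf]) (auto intro: countable_lepoll_inf[OF assms(2) inf] subset_imp_lepoll)
  finally show ?thesis by (intro lepoll_antisym) (auto intro: subset_imp_lepoll)
qed

theorem theorem2p8:
  fixes A :: "'a::semigroup_add set"
    and M :: "'b set"
    and L :: "'b set set"
  assumes no_idem: "\<forall>e::'a. e + e \<noteq> e"
    and kappa_uncountable: "uncountable (UNIV :: 'a set)"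
    and mu_uncountable: "uncountable M"
    and mu_le_kappa: "M \<lesssim> (UNIV :: 'a set)"
    and ad_mu: "almost_disjoint_family M L"
    and IP: "IP_set A"
    and card_A: "A \<approx> M"
  shows "\<exists>F :: 'a set set. F \<approx> L \<and> almost_disjoint_family A F \<and> (\<forall>B\<in>F. IP_set B)"
proof -
  obtain x :: "nat \<Rightarrow> 'a" where x: "\<And>H. finite H \<and> H \<noteq> {} \<and> H \<subseteq> {1..} \<Longrightarrow> fin_sum x H \<in> A"
    using IP unfolding IP_set_def by blast
  define C where "C = fin_sum x ` {H. finite H \<and> H \<noteq> {} \<and> H \<subseteq> {1..}}"
  have CA: "C \<subseteq> A" using x unfolding C_def by blast
  have cC: "countable C" unfolding C_def
    by (rule countable_image, rule countable_subset[OF _ countable_Collect_finite]) auto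
  have ipC: "IP_set D" if "C \<subseteq> D" for D
    unfolding IP_set_def using that unfolding C_def by blast
  have uA: "uncountable A" using card_A mu_uncountable countable_eqpoll eqpoll_sym by blast
  have "M \<approx> A - C"
    using eqpoll_trans[OF eqpoll_sym[OF card_A] eqpoll_sym[OF diff_countable_eqpoll[OF uA cC]]] .
  then obtain g where g: "bij_betw g M (A - C)" unfolding eqpoll_def by blast
  have ginj: "inj_on g M" and gim: "g ` M = A - C" using g by (auto simp: bij_betw_def)
  define F where "F = (\<lambda>B. C \<union> g ` B) ` L"
  have LM: "\<And>B. B \<in> L \<Longrightarrow> B \<subseteq> M \<and> B \<approx> M" using ad_mu unfolding almost_disjoint_family_def by blast
  have LD: "\<And>B B'. B \<in> L \<Longrightarrow> B' \<in> L \<Longrightarrow> B \<noteq> B' \<Longrightarrow> B \<inter> B' \<prec> M"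
    using ad_mu unfolding almost_disjoint_family_def by blast
  have gB: "g ` B \<approx> B" if "B \<subseteq> M" for B
    using that ginj by (meson inj_on_image_eqpoll_self inj_on_subset)
  have disjC: "C \<inter> g ` B = {}" if "B \<subseteq> M" for B using that gim by blast
  have injF: "inj_on (\<lambda>B. C \<union> g ` B) L"
  proof (rule inj_onI)
    fix B B' assume B: "B \<in> L" "B' \<in> L" and eq: "C \<union> g ` B = C \<union> g ` B'"
    have "g ` B = g ` B'" using eq disjC[of B] disjC[of B'] LM[OF B(1)] LM[OF B(2)] by blast
    then show "B = B'" using inj_on_image_eq_iff[OF ginj] LM B by blast
  qed
  have "F \<approx> L" unfolding F_def by (rule inj_on_image_eqpoll_self[OF injF])
  moreover have "almost_disjoint_family A F"
    unfolding almost_disjoint_family_def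
  proof (intro conjI ballI impI)
    fix E assume "E \<in> F"
    then obtain B where B: "B \<in> L" and E: "E = C \<union> g ` B" unfolding F_def by blast
    have BM: "B \<subseteq> M" "B \<approx> M" using LM[OF B] by auto
    show "E \<subseteq> A" using E CA gim BM by blast
    have "A \<approx> g ` B"
      using eqpoll_trans[OF card_A eqpoll_sym[OF eqpoll_trans[OF gB[OF BM(1)] BM(2)]]] .
    then have "A \<lesssim> E" using E by (meson eqpoll_imp_lepoll lepoll_trans subset_imp_lepoll Un_upper2)
    then show "E \<approx> A" using \<open>E \<subseteq> A\<close> by (simp add: lepoll_antisym subset_imp_lepoll)
  next
    fix E E' assume "E \<in> F" "E' \<in> F" "E \<noteq> E'"
    then obtain B B' where B: "B \<in> L" "B' \<in> L" and E: "E = C \<union> g ` B" "E' = C \<union> g ` B'"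
      unfolding F_def by blast
    with \<open>E \<noteq> E'\<close> have ne: "B \<noteq> B'" by blast
    have BM: "B \<subseteq> M" "B' \<subseteq> M" using LM B by auto
    have int: "E \<inter> E' = C \<union> g ` (B \<inter> B')"
      using E BM ginj by (auto simp: inj_on_def) (metis IntI imageI subsetD)+
    have sub: "C \<union> g ` (B \<inter> B') \<subseteq> A" using CA gim BM by blast
    show "E \<inter> E' \<prec> A"
    proof (cases "finite (B \<inter> B')")
      case True
      then have "countable (C \<union> g ` (B \<inter> B'))" using cC by (simp add: countable_finite)
      then show ?thesis unfolding int lesspoll_def using sub subset_imp_lepoll uA countable_eqpoll
        by (metis eqpoll_sym)
    next
      case False
      have e: "g ` (B \<inter> B') \<approx> B \<inter> B'" using gB BM by blast
      then have inf: "infinite (g ` (B \<inter> B'))" using False eqpoll_finite_iff by blast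
      have "C \<union> g ` (B \<inter> B') \<lesssim> g ` (B \<inter> B')"
        by (rule Un_lepoll_inf[OF inf]) (auto intro: countable_lepoll_inf[OF cC inf])
      also have "g ` (B \<inter> B') \<approx> B \<inter> B'" by (rule e)
      also have "B \<inter> B' \<prec> M" using LD B ne by blast
      also have "M \<approx> A" using card_A eqpoll_sym by blast
      finally show ?thesis unfolding int .
    qed
  qed
  moreover have "\<forall>E\<in>F. IP_set E" unfolding F_def using ipC by blast
  ultimately show ?thesis by blast
qed

end
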